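(* Let $d\ge2$ and let $\rho_{DS}=\sum_{\mathbf k}p_{\mathbf k}|D_{\mathbf k}\rangle\langle D_{\mathbf k}|$ be a diagonal symmetric state on $(\mathbb{C}^d)^{\otimes 4}$. Let $M^{(4)}(\rho_{DS})$ be the $\frac{d^3+d}{2}\times\frac{d^3+d}{2}$ matrix $$M^{(4)}(\rho_{DS})=\bar M\;\oplus\;\bigoplus_{0\le i<j\le d-1} M_{ij},$$ where $\bar M$ is the $s\times s$ matrix, $s=d(d+1)/2$, indexed by the ordered list $r_1,\dots,r_s$ of pairs $(a,b)$ with $0\le a\le b\le d-1$, with entries $\bar M_{r_\alpha r_\beta}=\bar p_{r_\alpha r_\beta}$, and each $M_{ij}$ is the $d\times d$ matrix with entries $(M_{ij})_{ab}=\bar p_{ijab}$. Then $\rho_{DS}$ is PPT if and only if $M^{(4)}(\rho_{DS})\in\mathcal{DNN}_{\frac{d^3+d}{2}}$.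
   Context: For $N=4$ and local dimension $d$: $\mathbf k=(k_0,\dots,k_{d-1})$, $k_i\ge0$, $\sum k_i=4$, and $|D_{\mathbf k}\rangle=\binom{4}{\mathbf k}^{-1/2}\sum_{\pi}\pi\big(|0\rangle^{\otimes k_0}\otimes\cdots\otimes|d-1\rangle^{\otimes k_{d-1}}\big)$, summing over distinct permutations of the tensor factors, $\binom{4}{\mathbf k}=\frac{4!}{k_0!\cdots k_{d-1}!}$. A diagonal symmetric state has $p_{\mathbf k}\ge0$, $\sum p_{\mathbf k}=1$. For indices $a,b,c,e$, $p_{abce}$ is the coefficient of the Dicke state with index multiset $\{a,b,c,e\}$ and $\bar p_{abce}=p_{abce}/\binom{4}{\mathbf k}$; for pairs $r_\alpha=(a,b)$, $r_\beta=(c,e)$, $\bar p_{r_\alpha r_\beta}=\bar p_{abce}$. PPT means the partial transpose with respect to every bipartition of the four parties ($1:3$ and $2:2$) is positive semidefinite. $\mathcal{DNN}_n$ is the cone of $n\times n$ positive semidefinite matrices with non-negative entries. *)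

theory Defs
  imports Complex_Main "HOL-Library.Multiset"
begin

text \<open>Computational basis of (C^d)^{\<otimes>4}: lists of length 4 with entries in {0..<d}.\<close>
definition idx4 :: "nat \<Rightarrow> nat list set" where
  "idx4 d = {xs. length xs = 4 \<and> set xs \<subseteq> {..<d}}"

text \<open>Occupation vectors k = (k_0,...,k_{d-1}) with sum 4, represented as multisets
  of size 4 over {0..<d} (count K i = k_i).\<close>
definition Kset :: "nat \<Rightarrow> nat multiset set" where
  "Kset d = {K. size K = 4 \<and> set_mset K \<subseteq> {..<d}}"

definition multinom :: "nat multiset \<Rightarrow> real" where
  "multinom K = fact (size K) / (\<Prod>i\<in>set_mset K. fact (count K i))"

text \<open>Dicke state |D_k>: normalised sum of all distinct arrangements of the multiset,
  i.e. of all basis lists xs with mset xs = K.\<close>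
definition dicke :: "nat multiset \<Rightarrow> nat list \<Rightarrow> complex" where
  "dicke K xs = (if mset xs = K then complex_of_real (1 / sqrt (multinom K)) else 0)"

definition rhoDS :: "nat \<Rightarrow> (nat multiset \<Rightarrow> real) \<Rightarrow> nat list \<Rightarrow> nat list \<Rightarrow> complex" where
  "rhoDS d p xs ys = (\<Sum>K\<in>Kset d. complex_of_real (p K) * dicke K xs * cnj (dicke K ys))"

definition diag_sym_coeffs :: "nat \<Rightarrow> (nat multiset \<Rightarrow> real) \<Rightarrow> bool" where
  "diag_sym_coeffs d p \<longleftrightarrow> (\<forall>K\<in>Kset d. 0 \<le> p K) \<and> (\<Sum>K\<in>Kset d. p K) = 1"

definition psd_on :: "'i set \<Rightarrow> ('i \<Rightarrow> 'i \<Rightarrow> complex) \<Rightarrow> bool" where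
  "psd_on I A \<longleftrightarrow> (\<forall>x\<in>I. \<forall>y\<in>I. A y x = cnj (A x y)) \<and>
     (\<forall>v :: 'i \<Rightarrow> complex. let q = (\<Sum>x\<in>I. \<Sum>y\<in>I. cnj (v x) * A x y * v y)
                             in Im q = 0 \<and> 0 \<le> Re q)"

definition ptrans :: "nat set \<Rightarrow> (nat list \<Rightarrow> nat list \<Rightarrow> complex) \<Rightarrow> nat list \<Rightarrow> nat list \<Rightarrow> complex" where
  "ptrans S A xs ys =
     A (map (\<lambda>i. if i \<in> S then ys ! i else xs ! i) [0..<4])
       (map (\<lambda>i. if i \<in> S then xs ! i else ys ! i) [0..<4])"

definition PPT4 :: "nat \<Rightarrow> (nat list \<Rightarrow> nat list \<Rightarrow> complex) \<Rightarrow> bool" where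
  "PPT4 d A \<longleftrightarrow> (\<forall>S. S \<subseteq> {0..<4} \<and> S \<noteq> {} \<and> S \<noteq> {0..<4} \<longrightarrow> psd_on (idx4 d) (ptrans S A))"

definition dnn_on :: "'i set \<Rightarrow> ('i \<Rightarrow> 'i \<Rightarrow> real) \<Rightarrow> bool" where
  "dnn_on I M \<longleftrightarrow> (\<forall>x\<in>I. \<forall>y\<in>I. M y x = M x y \<and> 0 \<le> M x y) \<and>
     (\<forall>v :: 'i \<Rightarrow> real. 0 \<le> (\<Sum>x\<in>I. \<Sum>y\<in>I. v x * M x y * v y))"

definition pbar :: "(nat multiset \<Rightarrow> real) \<Rightarrow> nat multiset \<Rightarrow> real" where
  "pbar p K = p K / multinom K"

text \<open>Index set of M^(4) = Mbar (+) (+)_{i<j} M_ij: Inl (a,b) with a\<le>b<d indexes Mbar;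
  Inr (i,j,a) indexes row/column a of the block M_ij.\<close>
definition M4idx :: "nat \<Rightarrow> ((nat \<times> nat) + (nat \<times> nat \<times> nat)) set" where
  "M4idx d = Inl ` {(a,b). a \<le> b \<and> b < d} \<union> Inr ` {(i,j,a). i < j \<and> j < d \<and> a < d}"

definition M4 :: "(nat multiset \<Rightarrow> real) \<Rightarrow> (nat \<times> nat) + (nat \<times> nat \<times> nat)
                   \<Rightarrow> (nat \<times> nat) + (nat \<times> nat \<times> nat) \<Rightarrow> real" where
  "M4 p x y = (case (x, y) of
      (Inl (a,b), Inl (c,e)) \<Rightarrow> pbar p {#a,b,c,e#}
    | (Inr (i,j,a), Inr (i',j',b)) \<Rightarrow> (if (i,j) = (i',j') then pbar p {#i,j,a,b#} else 0)
    | _ \<Rightarrow> 0)"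

end

theory Submission
  imports Defs "HOL-Library.Complex_Order"
begin


definition qf :: "'i set \<Rightarrow> ('i \<Rightarrow> 'i \<Rightarrow> complex) \<Rightarrow> ('i \<Rightarrow> complex) \<Rightarrow> complex" where
  "qf I G W = (\<Sum>x\<in>I. \<Sum>y\<in>I. cnj (W x) * G x y * W y)"

definition psdc :: "'i set \<Rightarrow> ('i \<Rightarrow> 'i \<Rightarrow> complex) \<Rightarrow> bool" where
  "psdc I G \<longleftrightarrow> (\<forall>W. 0 \<le> qf I G W)"

lemma psd_on_iff: "psd_on I A \<longleftrightarrow> (\<forall>x\<in>I. \<forall>y\<in>I. A y x = cnj (A x y)) \<and> psdc I A"
  unfolding psd_on_def psdc_def qf_def Let_def less_eq_complex_def by auto

lemma qf_push:
  assumes "finite I" "finite J" "h ` I \<subseteq> J" "\<And>x y. x \<in> I \<Longrightarrow> y \<in> I \<Longrightarrow> \<Gamma> x y = G (h x) (h y)"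
  shows "qf I \<Gamma> v = qf J G (\<lambda>j. \<Sum>x\<in>{x\<in>I. h x = j}. v x)"
proof -
  define W where "W = (\<lambda>j. \<Sum>x\<in>{x\<in>I. h x = j}. v x)"
  have inner: "(\<Sum>j'\<in>J. cnj (W j) * G j j' * W j') = (\<Sum>y\<in>I. cnj (W j) * G j (h y) * v y)" for j
  proof -
    have "(\<Sum>j'\<in>J. cnj (W j) * G j j' * W j') = (\<Sum>j'\<in>J. \<Sum>y\<in>{y\<in>I. h y = j'}. cnj (W j) * G j (h y) * v y)"
      unfolding W_def by (auto simp: sum_distrib_left intro!: sum.cong)
    also have "\<dots> = (\<Sum>y\<in>I. cnj (W j) * G j (h y) * v y)"
      by (rule sum.group[OF assms(1,2,3)])
    finally show ?thesis .
  qed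
  have outer: "(\<Sum>y\<in>I. cnj (W j) * G j (h y) * v y) =
     (\<Sum>x\<in>{x\<in>I. h x = j}. \<Sum>y\<in>I. cnj (v x) * G (h x) (h y) * v y)" for j
  proof -
    have "(\<Sum>y\<in>I. cnj (W j) * G j (h y) * v y) = (\<Sum>x\<in>{x\<in>I. h x = j}. \<Sum>y\<in>I. cnj (v x) * G j (h y) * v y)"
      unfolding W_def cnj_sum by (simp add: sum_distrib_right sum_distrib_left mult.assoc sum.swap[of _ I])
    also have "\<dots> = (\<Sum>x\<in>{x\<in>I. h x = j}. \<Sum>y\<in>I. cnj (v x) * G (h x) (h y) * v y)"
      by (intro sum.cong refl) auto
    finally show ?thesis .
  qed
  have "qf J G W = (\<Sum>j\<in>J. \<Sum>y\<in>I. cnj (W j) * G j (h y) * v y)"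
    unfolding qf_def using inner by simp
  also have "\<dots> = (\<Sum>j\<in>J. \<Sum>x\<in>{x\<in>I. h x = j}. \<Sum>y\<in>I. cnj (v x) * G (h x) (h y) * v y)"
    using outer by simp
  also have "\<dots> = (\<Sum>x\<in>I. \<Sum>y\<in>I. cnj (v x) * G (h x) (h y) * v y)"
    by (rule sum.group[OF assms(1,2,3)])
  also have "\<dots> = qf I \<Gamma> v"
    unfolding qf_def using assms(4) by (auto intro!: sum.cong)
  finally show ?thesis unfolding W_def by simp
qed

lemma psdc_push:
  assumes "finite I" "finite J" "h ` I \<subseteq> J" "\<And>x y. x \<in> I \<Longrightarrow> y \<in> I \<Longrightarrow> \<Gamma> x y = G (h x) (h y)"
    and "psdc J G"
  shows "psdc I \<Gamma>"
  using assms(5) qf_push[of I J h \<Gamma> G, OF assms(1-4)] unfolding psdc_def by metis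

lemma qf_reindex:
  assumes "inj_on g I"
  shows "qf (g ` I) G W = qf I (\<lambda>x y. G (g x) (g y)) (W \<circ> g)"
  unfolding qf_def using assms by (simp add: sum.reindex)

lemma psdc_block:
  assumes "finite J" "\<And>x y. x \<in> J \<Longrightarrow> y \<in> J \<Longrightarrow> \<kappa> x \<noteq> \<kappa> y \<Longrightarrow> G x y = 0"
    and "\<And>k. k \<in> \<kappa> ` J \<Longrightarrow> psdc {x\<in>J. \<kappa> x = k} G"
  shows "psdc J G"
  unfolding psdc_def
proof
  fix W
  have inner: "(\<Sum>y\<in>J. cnj (W x) * G x y * W y) = (\<Sum>y\<in>{y\<in>J. \<kappa> y = \<kappa> x}. cnj (W x) * G x y * W y)"
    if "x \<in> J" for x
    using assms(1) that by (intro sum.mono_neutral_right) (auto dest: assms(2)[of x])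
  have "qf J G W = (\<Sum>x\<in>J. \<Sum>y\<in>{y\<in>J. \<kappa> y = \<kappa> x}. cnj (W x) * G x y * W y)"
    unfolding qf_def using inner by simp
  also have "\<dots> = (\<Sum>k\<in>\<kappa> ` J. \<Sum>x\<in>{x\<in>J. \<kappa> x = k}. \<Sum>y\<in>{y\<in>J. \<kappa> y = \<kappa> x}. cnj (W x) * G x y * W y)"
    by (rule sum.image_gen[OF assms(1)])
  also have "\<dots> = (\<Sum>k\<in>\<kappa> ` J. qf {x\<in>J. \<kappa> x = k} G W)"
    unfolding qf_def by (intro sum.cong refl) (auto intro!: sum.cong)
  also have "0 \<le> \<dots>"
    using assms(3) unfolding psdc_def by (intro sum_nonneg) auto
  finally show "0 \<le> qf J G W" .
qed

lemma psdc_real: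
  fixes N :: "'i \<Rightarrow> 'i \<Rightarrow> real"
  assumes "finite I" "\<And>x y. x \<in> I \<Longrightarrow> y \<in> I \<Longrightarrow> N y x = N x y"
    and "\<And>u. 0 \<le> (\<Sum>x\<in>I. \<Sum>y\<in>I. u x * N x y * u y)"
  shows "psdc I (\<lambda>x y. complex_of_real (N x y))"
  unfolding psdc_def
proof
  fix W :: "'i \<Rightarrow> complex"
  define a where "a = (\<lambda>x. Re (W x))"
  define b where "b = (\<lambda>x. Im (W x))"
  have re: "Re (qf I (\<lambda>x y. complex_of_real (N x y)) W) =
      (\<Sum>x\<in>I. \<Sum>y\<in>I. a x * N x y * a y) + (\<Sum>x\<in>I. \<Sum>y\<in>I. b x * N x y * b y)"
    unfolding qf_def a_def b_def by (simp add: Re_sum sum.distrib[symmetric] algebra_simps)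
  have im: "Im (qf I (\<lambda>x y. complex_of_real (N x y)) W) =
      (\<Sum>x\<in>I. \<Sum>y\<in>I. a x * N x y * b y) - (\<Sum>x\<in>I. \<Sum>y\<in>I. b x * N x y * a y)"
    unfolding qf_def a_def b_def by (simp add: Im_sum sum_subtractf[symmetric] algebra_simps)
  have "(\<Sum>x\<in>I. \<Sum>y\<in>I. b x * N x y * a y) = (\<Sum>y\<in>I. \<Sum>x\<in>I. b x * N x y * a y)"
    by (rule sum.swap)
  also have "\<dots> = (\<Sum>x\<in>I. \<Sum>y\<in>I. a x * N x y * b y)"
    using assms(2) by (intro sum.cong refl) (simp add: algebra_simps)
  finally have "Im (qf I (\<lambda>x y. complex_of_real (N x y)) W) = 0" using im by simp
  moreover have "0 \<le> Re (qf I (\<lambda>x y. complex_of_real (N x y)) W)"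
    using re assms(3)[of a] assms(3)[of b] by simp
  ultimately show "0 \<le> qf I (\<lambda>x y. complex_of_real (N x y)) W"
    by (simp add: less_eq_complex_def)
qed


lemma qf_cong:
  assumes "\<And>x y. x \<in> I \<Longrightarrow> y \<in> I \<Longrightarrow> G x y = G' x y" "\<And>x. x \<in> I \<Longrightarrow> W x = W' x"
  shows "qf I G W = qf I G' W'"
  unfolding qf_def using assms by (auto intro!: sum.cong)

lemma qf_mono:
  assumes "finite I" "J \<subseteq> I" "\<And>x. x \<in> I - J \<Longrightarrow> W x = 0"
  shows "qf I G W = qf J G W"
proof -
  have "qf I G W = (\<Sum>x\<in>J. \<Sum>y\<in>I. cnj (W x) * G x y * W y)"
    unfolding qf_def using assms by (intro sum.mono_neutral_right) auto
  also have "\<dots> = qf J G W"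
    unfolding qf_def using assms by (intro sum.cong refl sum.mono_neutral_right) auto
  finally show ?thesis .
qed

section \<open>Evaluating the state\<close>

lemma multinom_pos: "multinom K > 0"
  unfolding multinom_def by (intro divide_pos_pos prod_pos) auto

lemma pbar_nonneg: "diag_sym_coeffs d p \<Longrightarrow> K \<in> Kset d \<Longrightarrow> 0 \<le> pbar p K"
  unfolding diag_sym_coeffs_def pbar_def using multinom_pos[of K] by auto

lemma Kset_eq: "Kset d = multisets_of_size {..<d} 4"
  unfolding Kset_def multisets_of_size_def by auto

lemma finite_Kset: "finite (Kset d)"
  unfolding Kset_eq by auto

lemma rho_eval:
  assumes "length xs = 4" "set xs \<subseteq> {..<d}"
  shows "rhoDS d p xs ys = (if mset xs = mset ys then complex_of_real (pbar p (mset xs)) else 0)"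
proof -
  have K: "mset xs \<in> Kset d" unfolding Kset_def using assms by auto
  have "rhoDS d p xs ys = (\<Sum>K\<in>Kset d. if K = mset xs then complex_of_real (p K) *
        complex_of_real (1 / sqrt (multinom K)) * cnj (dicke K ys) else 0)"
    unfolding rhoDS_def by (intro sum.cong refl) (auto simp: dicke_def)
  also have "\<dots> = complex_of_real (p (mset xs)) *
        complex_of_real (1 / sqrt (multinom (mset xs))) * cnj (dicke (mset xs) ys)"
    using K finite_Kset by (simp only: sum.delta if_True)
  also have "\<dots> = (if mset xs = mset ys then complex_of_real (pbar p (mset xs)) else 0)"
  proof -
    have m: "multinom (mset xs) > 0" by (rule multinom_pos)
    have "1 / sqrt (multinom (mset xs)) * (1 / sqrt (multinom (mset xs))) = 1 / multinom (mset xs)"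
      using m by (simp add: real_sqrt_mult_self)
    then show ?thesis
      unfolding dicke_def pbar_def
      by (auto simp: field_simps simp flip: of_real_mult)
  qed
  finally show ?thesis .
qed

section \<open>Partial transposes\<close>

definition selS :: "nat set \<Rightarrow> nat list \<Rightarrow> nat multiset" where
  "selS S xs = mset (map ((!) xs) (filter (\<lambda>i. i \<in> S) [0..<4]))"
definition selT :: "nat set \<Rightarrow> nat list \<Rightarrow> nat multiset" where
  "selT S xs = mset (map ((!) xs) (filter (\<lambda>i. i \<notin> S) [0..<4]))"

lemma mset_map_if:
  "mset (map (\<lambda>i. if P i then g i else h i) L) = mset (map h (filter (\<lambda>i. \<not> P i) L)) + mset (map g (filter P L))"
  by (induction L) auto

lemma mset_mix: "mset (map (\<lambda>i. if i \<in> S then ys ! i else xs ! i) [0..<4]) = selT S xs + selS S ys"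
  unfolding selS_def selT_def mset_map_if ..

lemma mset_sel: "length xs = 4 \<Longrightarrow> selT S xs + selS S xs = mset xs"
proof -
  assume "length xs = 4"
  then have "map (\<lambda>i. if i \<in> S then xs ! i else xs ! i) [0..<4] = xs"
    by (simp add: map_nth[of xs, unfolded \<open>length xs = 4\<close>])
  then show ?thesis using mset_mix[of S xs xs] by simp
qed

lemma set_sel: "length xs = 4 \<Longrightarrow> set xs \<subseteq> {..<d} \<Longrightarrow> set_mset (selS S xs) \<subseteq> {..<d} \<and> set_mset (selT S xs) \<subseteq> {..<d}"
proof -
  assume "length xs = 4" "set xs \<subseteq> {..<d}"
  then have "\<forall>i<4. xs ! i < d"
  proof (intro allI impI)
    fix i assume "length xs = 4" "set xs \<subseteq> {..<d}" "i < (4::nat)"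
    then have "xs ! i \<in> set xs" by (intro nth_mem) simp
    then show "xs ! i < d" using \<open>set xs \<subseteq> {..<d}\<close> by blast
  qed
  then show ?thesis unfolding selS_def selT_def by auto
qed

lemma size_selS: "S \<subseteq> {0..<4} \<Longrightarrow> size (selS S xs) = card S"
proof -
  assume S: "S \<subseteq> {0..<4}"
  have "set (filter (\<lambda>i. i \<in> S) [0..<4]) = S" using S by auto
  then have "card S = length (filter (\<lambda>i. i \<in> S) [0..<4])"
    using distinct_card[of "filter (\<lambda>i. i \<in> S) [0..<4]"] by simp
  moreover have "size (selS S xs) = length (filter (\<lambda>i. i \<in> S) [0..<4])"
    unfolding selS_def by (simp only: size_mset length_map)
  ultimately show ?thesis by simp
qed

definition Gf :: "(nat multiset \<Rightarrow> real) \<Rightarrow> nat multiset \<times> nat multiset \<Rightarrow> nat multiset \<times> nat multiset \<Rightarrow> complex" where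
  "Gf p x y = (if fst x + snd y = fst y + snd x then complex_of_real (pbar p (fst x + snd y)) else 0)"

definition hS :: "nat set \<Rightarrow> nat list \<Rightarrow> nat multiset \<times> nat multiset" where
  "hS S xs = (selT S xs, selS S xs)"

lemma ptrans_eq:
  assumes "xs \<in> idx4 d" "ys \<in> idx4 d"
  shows "ptrans S (rhoDS d p) xs ys = Gf p (hS S xs) (hS S ys)"
proof -
  let ?a = "map (\<lambda>i. if i \<in> S then ys ! i else xs ! i) [0..<4]"
  let ?b = "map (\<lambda>i. if i \<in> S then xs ! i else ys ! i) [0..<4]"
  have lx: "length xs = 4" "set xs \<subseteq> {..<d}" "length ys = 4" "set ys \<subseteq> {..<d}"
    using assms unfolding idx4_def by auto
  have "\<forall>i<4. xs ! i < d \<and> ys ! i < d"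
  proof (intro allI impI)
    fix i assume "i < (4::nat)"
    then have "xs ! i \<in> set xs" "ys ! i \<in> set ys" using lx by (auto intro!: nth_mem)
    then show "xs ! i < d \<and> ys ! i < d" using lx by blast
  qed
  then have "set ?a \<subseteq> {..<d}" by auto
  have r: "rhoDS d p ?a ?b = (if mset ?a = mset ?b then complex_of_real (pbar p (mset ?a)) else 0)"
    by (rule rho_eval) (simp, fact)
  have ma: "mset ?a = selT S xs + selS S ys" by (rule mset_mix)
  have mb: "mset ?b = selT S ys + selS S xs" by (rule mset_mix)
  show ?thesis
    unfolding ptrans_def Gf_def hS_def fst_conv snd_conv r ma mb ..
qed

section \<open>Block structure\<close>

abbreviation Ms :: "nat \<Rightarrow> nat \<Rightarrow> nat multiset set" where
  "Ms d r \<equiv> multisets_of_size {..<d} r"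

definition kap :: "nat multiset \<times> nat multiset \<Rightarrow> nat multiset \<times> nat multiset" where
  "kap x = (fst x - snd x, snd x - fst x)"

lemma Gf_zero: "kap x \<noteq> kap y \<Longrightarrow> Gf p x y = 0"
proof -
  assume "kap x \<noteq> kap y"
  moreover have "fst x + snd y = fst y + snd x \<Longrightarrow> kap x = kap y"
  proof -
    assume h: "fst x + snd y = fst y + snd x"
    have "count (fst x - snd x) z = count (fst y - snd y) z \<and> count (snd x - fst x) z = count (snd y - fst y) z" for z
    proof -
      have "count (fst x) z + count (snd y) z = count (fst y) z + count (snd x) z"
        using h by (metis count_union)
      then show ?thesis by (simp, arith)
    qed
    then show "kap x = kap y" unfolding kap_def by (simp add: multiset_eq_iff)
  qed
  ultimately show ?thesis unfolding Gf_def by auto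
qed

lemma Gf_sym: "Gf p y x = Gf p x y"
  unfolding Gf_def by (auto simp: add.commute)

lemma ms_split1: "(A::nat multiset) = (A - B) + (A - (A - B))"
  by (simp add: multiset_eq_iff)
lemma ms_split2: "(B::nat multiset) = (B - A) + (A - (A - B))"
  by (auto simp: multiset_eq_iff)
lemma ms_kap1: "((A::nat multiset) - B + X) - (B - A + X) = A - B"
  by (auto simp: multiset_eq_iff)
lemma ms_kap2: "((B::nat multiset) - A + X) - (A - B + X) = B - A"
  by (auto simp: multiset_eq_iff)


lemma block_image:
  assumes "A0 \<in> Ms d m" "B0 \<in> Ms d n"
  shows "{x \<in> Ms d m \<times> Ms d n. kap x = (A0 - B0, B0 - A0)} =
           (\<lambda>X. (A0 - B0 + X, B0 - A0 + X)) ` Ms d (size (A0 - (A0 - B0)))"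
    and "size (A0 - B0) + size (A0 - (A0 - B0)) = m" "size (B0 - A0) + size (A0 - (A0 - B0)) = n"
    and "set_mset (A0 - B0) \<subseteq> {..<d}" "set_mset (B0 - A0) \<subseteq> {..<d}"
proof -
  let ?P = "A0 - B0" and ?N = "B0 - A0" and ?r = "size (A0 - (A0 - B0))"
  have sA: "size A0 = m" "set_mset A0 \<subseteq> {..<d}" and sB: "size B0 = n" "set_mset B0 \<subseteq> {..<d}"
    using assms unfolding multisets_of_size_def by auto
  show s1: "size ?P + ?r = m" using sA ms_split1[of A0 B0] by (metis size_union)
  show s2: "size ?N + ?r = n" using sB ms_split2[of B0 A0] by (metis size_union)
  show p1: "set_mset ?P \<subseteq> {..<d}" using sA by (auto dest: in_diffD)
  show p2: "set_mset ?N \<subseteq> {..<d}" using sB by (auto dest: in_diffD)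
  show "{x \<in> Ms d m \<times> Ms d n. kap x = (?P, ?N)} = (\<lambda>X. (?P + X, ?N + X)) ` Ms d ?r"
  proof (intro equalityI subsetI)
    fix x assume x: "x \<in> {x \<in> Ms d m \<times> Ms d n. kap x = (?P, ?N)}"
    obtain A B where xAB: "x = (A, B)" by (cases x)
    have AB: "A - B = ?P" "B - A = ?N" "A \<in> Ms d m" "B \<in> Ms d n"
      using x xAB unfolding kap_def by auto
    define X where "X = A - (A - B)"
    have eA: "A = ?P + X" using ms_split1[of A B] AB unfolding X_def by simp
    have eB: "B = ?N + X" using ms_split2[of B A] AB unfolding X_def by simp
    have "size X = ?r" using eA AB(3) s1 unfolding multisets_of_size_def by auto
    moreover have "set_mset X \<subseteq> {..<d}" using AB(3) unfolding X_def multisets_of_size_def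
      by (auto dest: in_diffD)
    ultimately have "X \<in> Ms d ?r" unfolding multisets_of_size_def by auto
    then show "x \<in> (\<lambda>X. (?P + X, ?N + X)) ` Ms d ?r" using xAB eA eB by auto
  next
    fix x assume "x \<in> (\<lambda>X. (?P + X, ?N + X)) ` Ms d ?r"
    then obtain X where X: "X \<in> Ms d ?r" "x = (?P + X, ?N + X)" by auto
    have "?P + X \<in> Ms d m" "?N + X \<in> Ms d n"
      using X(1) s1 s2 p1 p2 unfolding multisets_of_size_def by auto
    moreover have "kap x = (?P, ?N)" unfolding X(2) kap_def fst_conv snd_conv
      using ms_kap1[of A0 B0 X] ms_kap2[of B0 A0 X] by simp
    ultimately show "x \<in> {x \<in> Ms d m \<times> Ms d n. kap x = (?P, ?N)}" using X by auto
  qed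
qed

lemma size1_eq: "size (X::nat multiset) = 1 \<Longrightarrow> X = {#Max (set_mset X)#}"
  by (metis Max_singleton set_mset_single size_1_singleton_mset)

lemma size2_eq: "size (X::nat multiset) = 2 \<Longrightarrow>
   X = {#Min (set_mset X), Max (set_mset X)#} \<and> Min (set_mset X) \<le> Max (set_mset X)"
proof -
  assume s: "size X = 2"
  then obtain a where a: "a \<in># X" by (metis multiset_nonemptyE size_empty zero_neq_numeral)
  have "size (X - {#a#}) = 1" using s a by (simp add: size_Diff_submset)
  then obtain b where b: "X - {#a#} = {#b#}" using size_1_singleton_mset by blast
  have X: "X = {#a, b#}" using a b by (metis insert_DiffM)
  show ?thesis using X by (cases "a \<le> b") (auto simp: max_def min_def add_mset_commute)
qed

lemma finite_M4idx: "finite (M4idx d)"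
proof -
  have "{(a,b). a \<le> b \<and> b < d} \<subseteq> {..<d} \<times> {..<d}" by auto
  moreover have "{(i,j,a). i < j \<and> j < d \<and> a < d} \<subseteq> {..<d} \<times> {..<d} \<times> {..<d}" by auto
  ultimately show ?thesis unfolding M4idx_def by (meson finite_Un finite_SigmaI finite_imageI finite_lessThan finite_subset)
qed

lemma dnn_pull:
  assumes "dnn_on (M4idx d) M" "finite I" "inj_on g I" "g ` I \<subseteq> M4idx d"
    and "\<And>x y. x \<in> I \<Longrightarrow> y \<in> I \<Longrightarrow> N x y = M (g x) (g y)"
  shows "0 \<le> (\<Sum>x\<in>I. \<Sum>y\<in>I. u x * N x y * u y)"
proof -
  define u' where "u' = (\<lambda>z. if z \<in> g ` I then u (inv_into I g z) else 0)"
  have "0 \<le> (\<Sum>x\<in>M4idx d. \<Sum>y\<in>M4idx d. u' x * M x y * u' y)"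
    using assms(1) unfolding dnn_on_def by blast
  also have "\<dots> = (\<Sum>x\<in>g ` I. \<Sum>y\<in>M4idx d. u' x * M x y * u' y)"
    using assms(4) finite_M4idx by (intro sum.mono_neutral_right) (auto simp: u'_def)
  also have "\<dots> = (\<Sum>x\<in>g ` I. \<Sum>y\<in>g ` I. u' x * M x y * u' y)"
    using assms(4) finite_M4idx by (intro sum.cong refl sum.mono_neutral_right) (auto simp: u'_def)
  also have "\<dots> = (\<Sum>x\<in>I. \<Sum>y\<in>I. u x * N x y * u y)"
    using assms(3,5) by (simp add: sum.reindex u'_def)
  finally show ?thesis .
qed





lemma Ms_fin: "finite (Ms d r)" by (rule finite_multisets_of_size) simp

lemma Ms_mem: "X \<in> Ms d r \<longleftrightarrow> size X = r \<and> set_mset X \<subseteq> {..<d}"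
  unfolding multisets_of_size_def by auto

lemma Max_lt: "size (X::nat multiset) > 0 \<Longrightarrow> set_mset X \<subseteq> {..<d} \<Longrightarrow> Max (set_mset X) < d"
  by (metis Max_in finite_set_mset lessThan_iff nonempty_has_size set_mset_eq_empty_iff size_empty subsetD)

lemma Min_le_Max: "size (X::nat multiset) > 0 \<Longrightarrow> Min (set_mset X) \<le> Max (set_mset X)"
  by (metis Max_ge Min_in finite_set_mset nonempty_has_size set_mset_eq_empty_iff size_empty)

lemma ms1: "X \<in> Ms d 1 \<Longrightarrow> \<exists>a. a < d \<and> X = {#a#}"
  unfolding Ms_mem by (metis size_1_singleton_mset lessThan_iff set_mset_single singletonI subsetD)

lemma ms2: "X \<in> Ms d 2 \<Longrightarrow> \<exists>a b. a \<le> b \<and> b < d \<and> X = {#a, b#}"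
proof -
  assume X: "X \<in> Ms d 2"
  then have s: "size X = 2" "set_mset X \<subseteq> {..<d}" by (auto simp: Ms_mem)
  then obtain a where a: "a \<in># X" by (metis multiset_nonemptyE size_empty zero_neq_numeral)
  have "size (X - {#a#}) = 1" using s a by (simp add: size_Diff_submset)
  then obtain b where b: "X - {#a#} = {#b#}" using size_1_singleton_mset by blast
  have XX: "X = {#a, b#}" using a b by (metis insert_DiffM)
  then have "a < d" "b < d" using s(2) by auto
  show ?thesis
  proof (cases "a \<le> b")
    case True then show ?thesis using XX \<open>b < d\<close> by blast
  next
    case False then have "b \<le> a" by simp
    moreover have "X = {#b, a#}" using XX by (simp add: add_mset_commute)
    ultimately show ?thesis using \<open>a < d\<close> by blast
  qed
qed

lemma core:
  assumes dnn: "dnn_on (M4idx d) (M4 p)" and ds: "diag_sym_coeffs d p"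
    and R: "R \<in> Ms d (4 - 2*r)" and r: "r \<le> 2"
  shows "0 \<le> (\<Sum>X\<in>Ms d r. \<Sum>Y\<in>Ms d r. u X * pbar p (R + X + Y) * u Y)"
proof -
  consider "r = 0" | "r = 1" | "r = 2" using r by linarith
  then show ?thesis
  proof cases
    case 1
    have M0: "Ms d r = {{#}}" using 1 unfolding multisets_of_size_def by auto
    have f0: "0 \<le> pbar p R" using R 1 ds by (intro pbar_nonneg) (auto simp: Kset_eq)
    have eq: "(\<Sum>X\<in>{{#}}. \<Sum>Y\<in>{{#}}. u X * pbar p (R + X + Y) * u Y) = pbar p R * (u {#})\<^sup>2"
      by (simp add: power2_eq_square mult.commute mult.left_commute)
    show ?thesis unfolding M0 eq using f0 by simp
  next
    case 2
    obtain i j where Rij: "i \<le> j" "j < d" "R = {#i, j#}" using ms2[of R d] R 2 by auto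
    have bX: "\<exists>a. a < d \<and> X = {#a#}" if "X \<in> Ms d r" for X
      using that 2 ms1 by simp
    show ?thesis
    proof (cases "i < j")
      case True
      let ?g = "\<lambda>X. Inr (i, j, Max (set_mset X)) :: (nat \<times> nat) + (nat \<times> nat \<times> nat)"
      show ?thesis
      proof (rule dnn_pull[OF dnn Ms_fin])
        show "inj_on ?g (Ms d r)"
        proof (intro inj_onI)
          fix X Y assume XY: "X \<in> Ms d r" "Y \<in> Ms d r" "?g X = ?g Y"
          obtain a b where ab: "X = {#a#}" "Y = {#b#}" using bX[OF XY(1)] bX[OF XY(2)] by blast
          show "X = Y" using XY(3) unfolding ab by simp
        qed
        show "?g ` Ms d r \<subseteq> M4idx d"
        proof
          fix z assume "z \<in> ?g ` Ms d r"
          then obtain X where X: "X \<in> Ms d r" "z = Inr (i, j, Max (set_mset X))" by blast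
          obtain a where "a < d" "X = {#a#}" using bX[OF X(1)] by blast
          then show "z \<in> M4idx d" using X(2) True Rij unfolding M4idx_def by auto
        qed
        fix X Y assume XY: "X \<in> Ms d r" "Y \<in> Ms d r"
        obtain a b where ab: "X = {#a#}" "Y = {#b#}" using bX[OF XY(1)] bX[OF XY(2)] by blast
        show "pbar p (R + X + Y) = M4 p (?g X) (?g Y)"
          unfolding M4_def ab Rij(3) by (simp add: add_mset_commute)
      qed
    next
      case False
      then have ij: "j = i" using Rij by simp
      let ?g = "\<lambda>X. Inl (min i (Max (set_mset X)), max i (Max (set_mset X))) :: (nat \<times> nat) + (nat \<times> nat \<times> nat)"
      have mm: "{#min i b, max i b#} = {#i, b#}" for b by (cases "i \<le> b") (auto simp: add_mset_commute)
      show ?thesis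
      proof (rule dnn_pull[OF dnn Ms_fin])
        show "inj_on ?g (Ms d r)"
        proof (intro inj_onI)
          fix X Y assume XY: "X \<in> Ms d r" "Y \<in> Ms d r" "?g X = ?g Y"
          obtain a b where ab: "X = {#a#}" "Y = {#b#}" using bX[OF XY(1)] bX[OF XY(2)] by blast
          have "{#min i a, max i a#} = {#min i b, max i b#}" using XY(3) unfolding ab by simp
          then have "a = b" unfolding mm by simp
          then show "X = Y" using ab by simp
        qed
        show "?g ` Ms d r \<subseteq> M4idx d"
        proof
          fix z assume "z \<in> ?g ` Ms d r"
          then obtain X where X: "X \<in> Ms d r" "z = ?g X" by blast
          obtain a where "a < d" "X = {#a#}" using bX[OF X(1)] by blast
          then show "z \<in> M4idx d" using X(2) Rij ij unfolding M4idx_def by (auto simp: max_def)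
        qed
        fix X Y assume XY: "X \<in> Ms d r" "Y \<in> Ms d r"
        obtain a b where ab: "X = {#a#}" "Y = {#b#}" using bX[OF XY(1)] bX[OF XY(2)] by blast
        have "M4 p (?g X) (?g Y) = pbar p ({#min i a, max i a#} + {#min i b, max i b#})"
          unfolding M4_def ab by (simp add: add_mset_commute)
        also have "\<dots> = pbar p (R + X + Y)"
          unfolding mm ab Rij(3) ij by (simp add: add_mset_commute)
        finally show "pbar p (R + X + Y) = M4 p (?g X) (?g Y)" by simp
      qed
    qed
  next
    case 3
    have R0: "R = {#}" using R 3 by (auto simp: Ms_mem)
    have eX: "\<exists>a b. a \<le> b \<and> b < d \<and> X = {#a, b#}" if "X \<in> Ms d r" for X
      using that 3 ms2 by simp
    let ?g = "\<lambda>X. Inl (Min (set_mset X), Max (set_mset X)) :: (nat \<times> nat) + (nat \<times> nat \<times> nat)"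
    have gv: "?g {#a, b#} = Inl (a, b)" if "a \<le> b" for a b
      using that by (simp add: min_def max_def)
    show ?thesis
    proof (rule dnn_pull[OF dnn Ms_fin])
      show "inj_on ?g (Ms d r)"
      proof (intro inj_onI)
        fix X Y assume XY: "X \<in> Ms d r" "Y \<in> Ms d r" "?g X = ?g Y"
        obtain a b c e where ab: "a \<le> b" "X = {#a, b#}" "c \<le> e" "Y = {#c, e#}"
          using eX[OF XY(1)] eX[OF XY(2)] by blast
        show "X = Y" using XY(3) unfolding ab(2,4) gv[OF ab(1)] gv[OF ab(3)] by simp
      qed
      show "?g ` Ms d r \<subseteq> M4idx d"
      proof
        fix z assume "z \<in> ?g ` Ms d r"
        then obtain X where X: "X \<in> Ms d r" "z = ?g X" by blast
        obtain a b where "a \<le> b" "b < d" "X = {#a, b#}" using eX[OF X(1)] by blast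
        then show "z \<in> M4idx d" using X(2) gv unfolding M4idx_def by auto
      qed
      fix X Y assume XY: "X \<in> Ms d r" "Y \<in> Ms d r"
      obtain a b c e where ab: "a \<le> b" "X = {#a, b#}" "c \<le> e" "Y = {#c, e#}"
        using eX[OF XY(1)] eX[OF XY(2)] by blast
      show "pbar p (R + X + Y) = M4 p (?g X) (?g Y)"
        unfolding ab(2,4) gv[OF ab(1)] gv[OF ab(3)] M4_def R0 by (simp add: add_mset_commute)
    qed
  qed
qed


lemma psdc_J:
  assumes dnn: "dnn_on (M4idx d) (M4 p)" and ds: "diag_sym_coeffs d p" and mn: "m + n = 4"
  shows "psdc (Ms d m \<times> Ms d n) (Gf p)"
proof (rule psdc_block[where \<kappa> = kap])
  show "finite (Ms d m \<times> Ms d n)" using Ms_fin by auto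
  show "Gf p x y = 0" if "kap x \<noteq> kap y" for x y using that by (rule Gf_zero)
  fix k assume "k \<in> kap ` (Ms d m \<times> Ms d n)"
  then obtain A0 B0 where AB: "A0 \<in> Ms d m" "B0 \<in> Ms d n" and k: "k = (A0 - B0, B0 - A0)"
    unfolding kap_def by auto
  let ?P = "A0 - B0" and ?N = "B0 - A0" and ?r = "size (A0 - (A0 - B0))"
  let ?g = "\<lambda>X. (?P + X, ?N + X)"
  note bi = block_image[OF AB]
  have blk: "{x \<in> Ms d m \<times> Ms d n. kap x = k} = ?g ` Ms d ?r" using bi(1) k by simp
  have inj: "inj_on ?g (Ms d ?r)" by (intro inj_onI) simp
  have R: "?P + ?N \<in> Ms d (4 - 2 * ?r)" using bi(2-5) mn by (auto simp: Ms_mem)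
  have r2: "?r \<le> 2" using bi(2,3) mn by linarith
  show "psdc {x \<in> Ms d m \<times> Ms d n. kap x = k} (Gf p)"
    unfolding psdc_def
  proof
    fix W
    have "qf {x \<in> Ms d m \<times> Ms d n. kap x = k} (Gf p) W = qf (Ms d ?r) (\<lambda>X Y. Gf p (?g X) (?g Y)) (W \<circ> ?g)"
      unfolding blk by (rule qf_reindex[OF inj])
    also have "\<dots> = qf (Ms d ?r) (\<lambda>X Y. complex_of_real (pbar p (?P + ?N + X + Y))) (W \<circ> ?g)"
      by (rule qf_cong) (auto simp: Gf_def ac_simps)
    also have "0 \<le> \<dots>"
    proof -
      have "psdc (Ms d ?r) (\<lambda>X Y. complex_of_real (pbar p (?P + ?N + X + Y)))"
      proof (rule psdc_real[OF Ms_fin])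
        show "pbar p (?P + ?N + Y + X) = pbar p (?P + ?N + X + Y)" for X Y by (simp add: ac_simps)
        show "0 \<le> (\<Sum>X\<in>Ms d ?r. \<Sum>Y\<in>Ms d ?r. u X * pbar p (?P + ?N + X + Y) * u Y)" for u
          by (rule core[OF dnn ds R r2])
      qed
      then show ?thesis unfolding psdc_def by blast
    qed
    finally show "0 \<le> qf {x \<in> Ms d m \<times> Ms d n. kap x = k} (Gf p) W" .
  qed
qed

lemma finite_idx4: "finite (idx4 d)"
proof -
  have "idx4 d = {xs. set xs \<subseteq> {..<d} \<and> length xs = 4}" unfolding idx4_def by auto
  then show ?thesis using finite_lists_length_eq[of "{..<d}" 4] by simp
qed

lemma Gf_real: "cnj (Gf p x y) = Gf p x y"
  unfolding Gf_def by simp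

lemma ppt_of_dnn:
  assumes dnn: "dnn_on (M4idx d) (M4 p)" and ds: "diag_sym_coeffs d p"
  shows "PPT4 d (rhoDS d p)"
  unfolding PPT4_def
proof (intro allI impI)
  fix S :: "nat set" assume S: "S \<subseteq> {0..<4} \<and> S \<noteq> {} \<and> S \<noteq> {0..<4}"
  have "card S \<le> card {0..<4::nat}" using S by (intro card_mono) auto
  then have cS: "card S \<le> 4" by simp
  show "psd_on (idx4 d) (ptrans S (rhoDS d p))"
    unfolding psd_on_iff
  proof
    show "\<forall>x\<in>idx4 d. \<forall>y\<in>idx4 d. ptrans S (rhoDS d p) y x = cnj (ptrans S (rhoDS d p) x y)"
    proof (intro ballI)
      fix x y assume xy: "x \<in> idx4 d" "y \<in> idx4 d"
      have "ptrans S (rhoDS d p) y x = Gf p (hS S y) (hS S x)" using xy(2,1) by (rule ptrans_eq)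
      also have "\<dots> = Gf p (hS S x) (hS S y)" by (rule Gf_sym)
      also have "\<dots> = cnj (Gf p (hS S x) (hS S y))" by (rule Gf_real[symmetric])
      also have "\<dots> = cnj (ptrans S (rhoDS d p) x y)" using ptrans_eq[OF xy] by simp
      finally show "ptrans S (rhoDS d p) y x = cnj (ptrans S (rhoDS d p) x y)" .
    qed
    show "psdc (idx4 d) (ptrans S (rhoDS d p))"
    proof (rule psdc_push[OF finite_idx4 _ _ _ psdc_J[OF dnn ds]])
      show "finite (Ms d (4 - card S) \<times> Ms d (card S))" using Ms_fin by auto
      show "4 - card S + card S = 4" using cS by simp
      show "hS S ` idx4 d \<subseteq> Ms d (4 - card S) \<times> Ms d (card S)"
      proof
        fix z assume "z \<in> hS S ` idx4 d"
        then obtain xs where xs: "xs \<in> idx4 d" "z = hS S xs" by blast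
        have l: "length xs = 4" "set xs \<subseteq> {..<d}" using xs(1) unfolding idx4_def by auto
        have "size (selS S xs) = card S" using S size_selS by blast
        moreover have "size (selT S xs) + size (selS S xs) = 4"
          using mset_sel[OF l(1), of S] l(1) by (metis size_mset size_union)
        ultimately show "z \<in> Ms d (4 - card S) \<times> Ms d (card S)"
          using set_sel[OF l, of S] xs(2) unfolding hS_def by (auto simp: Ms_mem)
      qed
      show "ptrans S (rhoDS d p) x y = Gf p (hS S x) (hS S y)" if "x \<in> idx4 d" "y \<in> idx4 d" for x y
        using that by (rule ptrans_eq)
    qed
  qed
qed


lemma hS23: "hS {2,3} [a, b, c, e] = ({#a, b#}, {#c, e#})"
  unfolding hS_def selS_def selT_def by (simp add: upt_rec)

definition gemb :: "(nat \<times> nat) + (nat \<times> nat \<times> nat) \<Rightarrow> nat list" where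
  "gemb z = (case z of Inl (a, b) \<Rightarrow> [a, b, a, b] | Inr (i, j, a) \<Rightarrow> [i, a, j, a])"

lemma cancel_pairs:
  assumes "{#i, a#} + {#j', b#} = {#i', b#} + {#(j::nat), a#}"
  shows "{#i, j'#} = {#i', j#}"
proof -
  have "{#i, j'#} + {#a, b#} = {#i', j#} + {#a, b#}" using assms by (simp add: add_mset_commute)
  then show ?thesis by simp
qed

lemma M4_Gf:
  assumes "x \<in> M4idx d" "y \<in> M4idx d"
  shows "Gf p (hS {2,3} (gemb x)) (hS {2,3} (gemb y)) = complex_of_real (M4 p x y)"
proof -
  consider a b c e where "x = Inl (a, b)" "y = Inl (c, e)"
    | a b i j c where "x = Inl (a, b)" "y = Inr (i, j, c)" "i < j"
    | a b i j c where "x = Inr (i, j, c)" "y = Inl (a, b)" "i < j"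
    | i j a i' j' b where "x = Inr (i, j, a)" "y = Inr (i', j', b)" "i < j" "i' < j'"
    using assms unfolding M4idx_def by auto
  then show ?thesis
  proof cases
    case 1
    then show ?thesis by (simp add: gemb_def hS23 Gf_def M4_def add_mset_commute)
  next
    case 2
    have "{#a, b#} + {#j, c#} \<noteq> {#i, c#} + {#a, b#}"
    proof
      assume "{#a, b#} + {#j, c#} = {#i, c#} + {#a, b#}"
      then have "{#j#} + {#a, b, c#} = {#i#} + {#a, b, c#}" by (simp add: add_mset_commute)
      then show False using 2 by simp
    qed
    then show ?thesis using 2 by (simp add: gemb_def hS23 Gf_def M4_def)
  next
    case 3
    have "{#i, c#} + {#a, b#} \<noteq> {#a, b#} + {#j, c#}"
    proof
      assume "{#i, c#} + {#a, b#} = {#a, b#} + {#j, c#}"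
      then have "{#j#} + {#a, b, c#} = {#i#} + {#a, b, c#}" by (simp add: add_mset_commute)
      then show False using 3 by simp
    qed
    then show ?thesis using 3 by (simp add: gemb_def hS23 Gf_def M4_def)
  next
    case 4
    show ?thesis
    proof (cases "(i, j) = (i', j')")
      case True
      then show ?thesis using 4 by (simp add: gemb_def hS23 Gf_def M4_def add_mset_commute)
    next
      case False
      have "{#i, a#} + {#j', b#} \<noteq> {#i', b#} + {#j, a#}"
      proof
        assume "{#i, a#} + {#j', b#} = {#i', b#} + {#j, a#}"
        then have e: "{#i, j'#} = {#i', j#}" by (rule cancel_pairs)
        then have "i \<in># {#i', j#}" by (metis add_mset_add_single union_single_eq_member)
        then have "i = i' \<or> i = j" by simp
        then show False
        proof
          assume "i = i'"
          then have "j' = j" using e by simp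
          then show False using False \<open>i = i'\<close> by simp
        next
          assume "i = j" then show False using 4 by simp
        qed
      qed
      then show ?thesis using 4 False by (auto simp: gemb_def hS23 Gf_def M4_def)
    qed
  qed
qed


lemma gemb_inj: "inj_on gemb (M4idx d)"
  by (intro inj_onI) (auto simp: M4idx_def gemb_def)

lemma gemb_idx: "gemb ` M4idx d \<subseteq> idx4 d"
  by (auto simp: M4idx_def gemb_def idx4_def)

lemma dnn_of_ppt:
  assumes ppt: "PPT4 d (rhoDS d p)" and ds: "diag_sym_coeffs d p"
  shows "dnn_on (M4idx d) (M4 p)"
  unfolding dnn_on_def
proof (intro conjI ballI allI)
  fix x y assume xy: "x \<in> M4idx d" "y \<in> M4idx d"
  have "complex_of_real (M4 p y x) = complex_of_real (M4 p x y)"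
    using M4_Gf[OF xy(2,1), of p] M4_Gf[OF xy, of p] Gf_sym by metis
  then show "M4 p y x = M4 p x y" by simp
  show "0 \<le> M4 p x y" using xy unfolding M4idx_def
    by (auto simp: M4_def Kset_def intro!: pbar_nonneg[OF ds])
next
  fix u :: "(nat \<times> nat) + (nat \<times> nat \<times> nat) \<Rightarrow> real"
  let ?I = "M4idx d" and ?G = "ptrans {2,3} (rhoDS d p)"
  have ne: "{2,3} \<noteq> {0..<4::nat}"
  proof
    assume "{2,3} = {0..<4::nat}"
    then have "(0::nat) \<in> {2,3}" by simp
    then show False by simp
  qed
  have "{2,3} \<subseteq> {0..<4::nat}" "{2,3} \<noteq> ({}::nat set)" by auto
  note this ne
  then have "psd_on (idx4 d) ?G" using ppt unfolding PPT4_def by blast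
  then have ps: "psdc (idx4 d) ?G" unfolding psd_on_iff by blast
  define v where "v = (\<lambda>xs. if xs \<in> gemb ` ?I then complex_of_real (u (inv_into ?I gemb xs)) else 0)"
  have "0 \<le> qf (idx4 d) ?G v" using ps unfolding psdc_def by blast
  also have "qf (idx4 d) ?G v = qf (gemb ` ?I) ?G v"
    using finite_idx4 gemb_idx by (intro qf_mono) (auto simp: v_def)
  also have "\<dots> = qf ?I (\<lambda>x y. ?G (gemb x) (gemb y)) (v \<circ> gemb)"
    by (rule qf_reindex[OF gemb_inj])
  also have "\<dots> = qf ?I (\<lambda>x y. complex_of_real (M4 p x y)) (\<lambda>x. complex_of_real (u x))"
  proof (rule qf_cong)
    fix x y assume xy: "x \<in> ?I" "y \<in> ?I"
    have gx: "gemb x \<in> idx4 d" "gemb y \<in> idx4 d" using xy gemb_idx by auto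
    show "?G (gemb x) (gemb y) = complex_of_real (M4 p x y)"
      using ptrans_eq[OF gx] M4_Gf[OF xy] by simp
  next
    fix x assume "x \<in> ?I"
    then show "(v \<circ> gemb) x = complex_of_real (u x)"
      using gemb_inj by (simp add: v_def inv_into_f_f)
  qed
  also have "\<dots> = complex_of_real (\<Sum>x\<in>?I. \<Sum>y\<in>?I. u x * M4 p x y * u y)"
    unfolding qf_def by simp
  finally show "0 \<le> (\<Sum>x\<in>?I. \<Sum>y\<in>?I. u x * M4 p x y * u y)"
    by (simp add: less_eq_complex_def)
qed

theorem theorem8:
  fixes d :: nat and p :: "nat multiset \<Rightarrow> real"
  assumes "d \<ge> 2"
    and "diag_sym_coeffs d p"
  shows "PPT4 d (rhoDS d p) \<longleftrightarrow> dnn_on (M4idx d) (M4 p)"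
  using dnn_of_ppt[OF _ assms(2)] ppt_of_dnn[OF _ assms(2)] by blast


end
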